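(* Let $m\ge6$ be even, $t=m/2$, and $s$ an integer with $2\le s\le 2^{t-1}-1$. Let $E_1,\dots,E_\alpha$ be a partial spread in $\mathbb{F}_2^m$ and $A,B\subseteq\{1,\dots,\alpha\}$ with $|A|=|B|=s$ and $|A\cap B|=1$. Let $f=\sum_{i\in A}f_i$ and $g=\sum_{i\in B}f_i$. Then $\mathcal{C}_{f,g}$ is a minimal binary linear code of length $2^m-1$ and dimension $m+2$, and the multiset of weights of its codewords is: $0$ once; $s(2^t-1)$ twice; $(2s-2)(2^t-1)$ once; $2^{m-1}$ with multiplicity $2^m-1$; $2^{m-1}-s$ with multiplicity $2(2^t+1-s)(2^t-1)$; $2^{m-1}-(2s-2)$ with multiplicity $(2^t+3-2s)(2^t-1)$; $2^{m-1}+2^t-s$ with multiplicity $2s(2^t-1)$; $2^{m-1}+2^t-(2s-2)$ with multiplicity $(2s-2)(2^t-1)$ (listed weights that coincide have their multiplicities added). Moreover, if in addition $s\le 2^{t-2}$, then $w_{\min}/w_{\max}\le 1/2$, where $w_{\min}$ and $w_{\max}$ are the minimum and maximum nonzero weights of $\mathcal{C}_{f,g}$.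
   Context: A partial spread in $\mathbb{F}_2^m$ ($m=2t$) is a set of subspaces $E_1,\dots,E_\alpha$ of $\mathbb{F}_2^m$, each of dimension $t$, with $E_i\cap E_j=\{\mathbf{0}\}$ for $i\ne j$. $f_i:\mathbb{F}_2^m\to\mathbb{F}_2$ is the indicator function of $E_i\setminus\{\mathbf{0}\}$; sums of Boolean functions are mod 2. $\mathcal{C}_{f,g}=\{(uf(\mathbf{x})+rg(\mathbf{x})+\mathbf{v}\cdot\mathbf{x})_{\mathbf{x}\in\mathbb{F}_2^m\setminus\{\mathbf{0}\}}: u,r\in\mathbb{F}_2,\ \mathbf{v}\in\mathbb{F}_2^m\}$ with the standard inner product. A binary linear code is minimal if no nonzero codeword $\mathbf{c}$ has a nonzero codeword $\mathbf{c}'\neq\mathbf{c}$ with $\mathrm{Supp}(\mathbf{c}')\subseteq\mathrm{Supp}(\mathbf{c})$, where $\mathrm{Supp}$ denotes the set of nonzero coordinate positions. *)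

theory Defs
  imports Complex_Main "HOL-Library.Z2" "HOL-Library.Function_Algebras" "HOL-Library.Multiset"
begin

text \<open>Vectors of F_2^m are functions 'n \<Rightarrow> bit with CARD('n) = m; words of a binary code
  with coordinates indexed by a set X are functions X \<Rightarrow> bit (extended by 0 outside X).\<close>

definition fscale :: "bit \<Rightarrow> ('a \<Rightarrow> bit) \<Rightarrow> ('a \<Rightarrow> bit)" where
  "fscale c f = (\<lambda>x. c * f x)"

interpretation fvs: Vector_Spaces.vector_space "fscale :: bit \<Rightarrow> ('a \<Rightarrow> bit) \<Rightarrow> ('a \<Rightarrow> bit)"
  by unfold_locales (auto simp: fscale_def algebra_simps fun_eq_iff)

definition dotp :: "('n::finite \<Rightarrow> bit) \<Rightarrow> ('n \<Rightarrow> bit) \<Rightarrow> bit" where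
  "dotp v x = (\<Sum>i\<in>UNIV. v i * x i)"

definition partial_spread :: "nat \<Rightarrow> nat \<Rightarrow> (nat \<Rightarrow> ('n::finite \<Rightarrow> bit) set) \<Rightarrow> bool" where
  "partial_spread t \<alpha> E \<longleftrightarrow>
     (\<forall>i\<in>{1..\<alpha>}. fvs.subspace (E i) \<and> fvs.dim (E i) = t) \<and>
     (\<forall>i\<in>{1..\<alpha>}. \<forall>j\<in>{1..\<alpha>}. i \<noteq> j \<longrightarrow> E i \<inter> E j = {0})"

definition ind :: "('n \<Rightarrow> bit) set \<Rightarrow> ('n \<Rightarrow> bit) \<Rightarrow> bit" where
  "ind E x = (if x \<in> E - {0} then 1 else 0)"

definition coords :: "('n::finite \<Rightarrow> bit) set" where
  "coords = UNIV - {0}"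

definition code_fg :: "(('n::finite \<Rightarrow> bit) \<Rightarrow> bit) \<Rightarrow> (('n \<Rightarrow> bit) \<Rightarrow> bit) \<Rightarrow> (('n \<Rightarrow> bit) \<Rightarrow> bit) set" where
  "code_fg f g = {(\<lambda>x. if x \<in> coords then u * f x + r * g x + dotp v x else 0) | u r v. True}"

definition supp :: "'a set \<Rightarrow> ('a \<Rightarrow> bit) \<Rightarrow> 'a set" where
  "supp X c = {x \<in> X. c x \<noteq> 0}"

definition wt :: "'a set \<Rightarrow> ('a \<Rightarrow> bit) \<Rightarrow> nat" where
  "wt X c = card (supp X c)"

definition binary_linear_code :: "'a set \<Rightarrow> ('a \<Rightarrow> bit) set \<Rightarrow> bool" where
  "binary_linear_code X C \<longleftrightarrow> fvs.subspace C \<and> (\<forall>c\<in>C. \<forall>x. x \<notin> X \<longrightarrow> c x = 0)"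

definition code_length :: "'a set \<Rightarrow> nat" where
  "code_length X = card X"

definition code_dim :: "('a \<Rightarrow> bit) set \<Rightarrow> nat" where
  "code_dim C = fvs.dim C"

definition minimal_code :: "'a set \<Rightarrow> ('a \<Rightarrow> bit) set \<Rightarrow> bool" where
  "minimal_code X C \<longleftrightarrow>
     (\<forall>c\<in>C. c \<noteq> 0 \<longrightarrow> \<not> (\<exists>c'\<in>C. c' \<noteq> 0 \<and> c' \<noteq> c \<and> supp X c' \<subseteq> supp X c))"

definition weight_mset :: "'a set \<Rightarrow> ('a \<Rightarrow> bit) set \<Rightarrow> nat multiset" where
  "weight_mset X C = image_mset (wt X) (mset_set C)"

definition nonzero_weights :: "'a set \<Rightarrow> ('a \<Rightarrow> bit) set \<Rightarrow> nat set" where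
  "nonzero_weights X C = {wt X c | c. c \<in> C \<and> c \<noteq> 0}"

end

theory Submission
  imports Defs "HOL-Library.Cardinality"
begin


lemma bitU: "(UNIV :: bit set) = {0,1}" by (auto intro: bit.exhaust)

instance bit :: finite
  by standard (simp add: bitU)

lemma card_bit: "CARD(bit) = 2" by (simp add: bitU)

lemma fun_add_self[simp]: "(x::'a\<Rightarrow>bit) + x = 0"
  by (simp add: fun_eq_iff)

lemma fun_add_eq0: "((x::'a\<Rightarrow>bit) + y = 0) \<longleftrightarrow> x = y"
  by (auto simp: fun_eq_iff) (metis add_bit_eq_xor bit_not_zero_iff xor_self_eq)

lemma card_fun_bit: "CARD('n::finite \<Rightarrow> bit) = 2 ^ CARD('n)"
  by (simp add: card_fun card_bit)

lemma fscale_one: "fscale 1 b = b" unfolding fscale_def by (simp only: mult_1_left)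
lemma fscale_zero[simp]: "fscale 0 b = 0" unfolding fscale_def zero_fun_def by (simp only: mult_zero_left)

lemma card_span_indep:
  assumes "finite B" "fvs.independent (B :: ('a::finite \<Rightarrow> bit) set)"
  shows "card (fvs.span B) = 2 ^ card B"
  using assms
proof (induction B rule: finite_induct)
  case empty then show ?case by simp
next
  case (insert b B)
  have ind: "fvs.independent B" and nb: "b \<notin> fvs.span B"
    using insert.prems insert.hyps(2) by (auto simp: fvs.independent_insert)
  have eq: "fvs.span (insert b B) = fvs.span B \<union> (\<lambda>y. b + y) ` fvs.span B"
  proof
    show "fvs.span (insert b B) \<subseteq> fvs.span B \<union> (\<lambda>y. b + y) ` fvs.span B"
    proof
      fix x assume "x \<in> fvs.span (insert b B)"
      then obtain k where k: "x - fscale k b \<in> fvs.span B" by (auto simp: fvs.span_insert)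
      show "x \<in> fvs.span B \<union> (\<lambda>y. b + y) ` fvs.span B"
      proof (cases "k = 0")
        case True then show ?thesis using k by simp
      next
        case False
        then have "x - b \<in> fvs.span B" using k by simp
        moreover have "x = b + (x - b)" by simp
        ultimately show ?thesis by blast
      qed
    qed
  next
    show "fvs.span B \<union> (\<lambda>y. b + y) ` fvs.span B \<subseteq> fvs.span (insert b B)"
      using fvs.span_mono[of B "insert b B"] fvs.span_add[of b "insert b B"]
        fvs.span_base[of b "insert b B"] by auto
  qed
  have disj: "fvs.span B \<inter> (\<lambda>y. b + y) ` fvs.span B = {}"
  proof (rule ccontr)
    assume "\<not> ?thesis"
    then obtain y where y: "y \<in> fvs.span B" "b + y \<in> fvs.span B" by auto
    then have "(b + y) + y \<in> fvs.span B" using fvs.span_add by blast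
    then have "b \<in> fvs.span B" by (simp add: add.assoc)
    then show False using nb by simp
  qed
  have fin: "finite (fvs.span B)" by simp
  have "card (fvs.span (insert b B)) = card (fvs.span B) + card ((\<lambda>y. b + y) ` fvs.span B)"
    unfolding eq by (rule card_Un_disjoint) (use fin disj in auto)
  also have "card ((\<lambda>y. b + y) ` fvs.span B) = card (fvs.span B)"
    by (rule card_image) (auto simp: inj_on_def)
  finally show ?case using insert.IH[OF ind] insert.hyps by simp
qed

lemma card_subspace:
  assumes "fvs.subspace (S :: ('a::finite \<Rightarrow> bit) set)"
  shows "card S = 2 ^ fvs.dim S"
proof -
  obtain B where B: "B \<subseteq> S" "fvs.independent B" "S \<subseteq> fvs.span B" "card B = fvs.dim S"
    by (rule fvs.basis_exists)
  have "fvs.span B \<subseteq> S" using fvs.span_minimal[OF B(1) assms] .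
  then have "fvs.span B = S" using B(3) by auto
  moreover have "finite B" by simp
  ultimately show ?thesis using card_span_indep[OF _ B(2)] B(4) by simp
qed

lemma dotp_add_right: "dotp v (x + y) = dotp v x + dotp v y"
  unfolding dotp_def by (simp only: plus_fun_def distrib_left sum.distrib)
lemma dotp_add_left: "dotp (v + w) x = dotp v x + dotp w x"
  unfolding dotp_def by (simp only: plus_fun_def distrib_right sum.distrib)
lemma dotp_comm: "dotp v x = dotp x v" unfolding dotp_def by (rule sum.cong[OF refl], rule mult.commute)
lemma dotp_zero_right[simp]: "dotp v 0 = 0" by (simp add: dotp_def)
lemma dotp_zero_left[simp]: "dotp 0 v = 0" by (simp add: dotp_def)
lemma dotp_nonzero:
  assumes "(v::'n::finite \<Rightarrow> bit) \<noteq> 0" shows "\<exists>x. dotp v x = 1"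
proof -
  obtain i where i: "v i \<noteq> 0" using assms by (auto simp: fun_eq_iff)
  define x where "x = (\<lambda>j. if j = i then (1::bit) else 0)"
  have "dotp v x = (\<Sum>j\<in>UNIV. if j = i then v j else 0)"
    unfolding dotp_def x_def by (rule sum.cong) auto
  also have "\<dots> = v i" by simp
  finally show ?thesis using i by auto
qed

lemma half_count:
  assumes "fvs.subspace (E :: ('n::finite \<Rightarrow> bit) set)" "e \<in> E" "dotp v e = 1"
  shows "card {x\<in>E. dotp v x = 1} = card {x\<in>E. dotp v x = 0}"
proof -
  have "bij_betw (\<lambda>x. x + e) {x\<in>E. dotp v x = 0} {x\<in>E. dotp v x = 1}"
  proof (rule bij_betw_byWitness[where f' = "\<lambda>x. x + e"])
    show "\<forall>a\<in>{x \<in> E. dotp v x = 0}. a + e + e = a" by (simp add: add.assoc)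
    show "\<forall>a\<in>{x \<in> E. dotp v x = 1}. a + e + e = a" by (simp add: add.assoc)
    show "(\<lambda>x. x + e) ` {x \<in> E. dotp v x = 0} \<subseteq> {x \<in> E. dotp v x = 1}"
      using assms by (auto simp: dotp_add_right fvs.subspace_add)
    show "(\<lambda>x. x + e) ` {x \<in> E. dotp v x = 1} \<subseteq> {x \<in> E. dotp v x = 0}"
      using assms by (auto simp: dotp_add_right fvs.subspace_add)
  qed
  then show ?thesis by (simp add: bij_betw_same_card)
qed

lemma card_split:
  fixes E :: "('n::finite \<Rightarrow> bit) set"
  shows "card E = card {x\<in>E. dotp v x = 1} + card {x\<in>E. dotp v x = 0}"
proof -
  have "E = {x\<in>E. dotp v x = 1} \<union> {x\<in>E. dotp v x = 0}" by auto
  then have "card E = card ({x\<in>E. dotp v x = 1} \<union> {x\<in>E. dotp v x = 0})" by simp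
  also have "\<dots> = card {x\<in>E. dotp v x = 1} + card {x\<in>E. dotp v x = 0}"
    by (rule card_Un_disjoint) auto
  finally show ?thesis .
qed

definition dual :: "('n::finite \<Rightarrow> bit) set \<Rightarrow> ('n \<Rightarrow> bit) set" where
  "dual E = {v. \<forall>x\<in>E. dotp v x = 0}"

lemma count_nondual:
  assumes "fvs.subspace (E :: ('n::finite \<Rightarrow> bit) set)" "card E = 2 ^ t" "t \<ge> 1" "v \<notin> dual E"
  shows "card {x\<in>E. dotp v x = 1} = 2 ^ (t - 1)" "card {x\<in>E. dotp v x = 0} = 2 ^ (t - 1)"
proof -
  obtain e where "e \<in> E" "dotp v e = 1" using assms(4) by (auto simp: dual_def)
  then have h: "card {x\<in>E. dotp v x = 1} = card {x\<in>E. dotp v x = 0}"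
    using half_count assms(1) by blast
  have "2 ^ t = 2 * (2::nat) ^ (t - 1)" using assms(3)
    by (metis Suc_diff_le diff_Suc_1 power_Suc)
  then show "card {x\<in>E. dotp v x = 1} = 2 ^ (t - 1)" "card {x\<in>E. dotp v x = 0} = 2 ^ (t - 1)"
    using card_split[of E v] h assms(2) by auto
qed

lemma count_dual:
  assumes "v \<in> dual E"
  shows "{x\<in>E. dotp v x = 1} = {}" "{x\<in>E. dotp v x = 0} = E"
  using assms by (auto simp: dual_def)

lemma card_filter_sum: "finite A \<Longrightarrow> card {x\<in>A. P x} = (\<Sum>x\<in>A. if P x then 1 else 0)"
  by (simp add: sum.If_cases Int_def)

lemma card_filter_sumU: "card {x. P x} = (\<Sum>x\<in>(UNIV::'a::finite set). if P x then 1 else 0)"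
  using card_filter_sum[of "UNIV::'a set" P] by simp

lemma card_dual:
  fixes E :: "('n::finite \<Rightarrow> bit) set"
  assumes sub: "fvs.subspace E" and cE: "card E = 2 ^ t" and t1: "1 \<le> t" and tM: "t \<le> CARD('n)"
  shows "card (dual E) = 2 ^ (CARD('n) - t)"
proof -
  define M where "M = CARD('n)"
  define D where "D = card (dual E)"
  have cU: "card (UNIV :: ('n \<Rightarrow> bit) set) = 2 ^ M" by (simp add: M_def card_fun_bit)
  have M1: "M \<ge> 1" using t1 tM M_def by simp
  have cv: "card {v. dotp v x = 1} = (if x = 0 then 0 else 2 ^ (M - 1))" for x :: "'n \<Rightarrow> bit"
  proof (cases "x = 0")
    case True then show ?thesis by simp
  next
    case False
    then have "x \<notin> dual UNIV" using dotp_nonzero[OF False] by (auto simp: dual_def)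
    then have "card {v\<in>UNIV. dotp x v = 1} = 2 ^ (M - 1)"
      using count_nondual(1)[OF fvs.subspace_UNIV cU M1] by blast
    then show ?thesis using False by (simp add: dotp_comm)
  qed
  have ce: "card {x\<in>E. dotp v x = 1} = (if v \<in> dual E then 0 else 2 ^ (t - 1))" for v
    using count_nondual(1)[OF sub cE t1, of v] count_dual(1)[of v E] by auto
  have "(\<Sum>v\<in>UNIV. card {x\<in>E. dotp v x = 1}) = (\<Sum>v\<in>UNIV. \<Sum>x\<in>E. if dotp v x = 1 then 1 else 0)"
    by (simp add: card_filter_sum)
  also have "\<dots> = (\<Sum>x\<in>E. \<Sum>v\<in>UNIV. if dotp v x = 1 then 1 else 0)"
    by (rule sum.swap)
  also have "\<dots> = (\<Sum>x\<in>E. card {v. dotp v x = 1})"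
    by (simp add: card_filter_sumU)
  finally have sw: "(\<Sum>v\<in>UNIV. card {x\<in>E. dotp v x = 1}) = (\<Sum>x\<in>E. card {v. dotp v x = 1})" .
  have "(\<Sum>v\<in>UNIV. card {x\<in>E. dotp v x = 1}) = (\<Sum>v\<in>UNIV. if v \<in> dual E then 0 else 2 ^ (t - 1))"
    using ce by simp
  also have "\<dots> = (\<Sum>v\<in>UNIV - dual E. 2 ^ (t - 1))"
    by (rule sum.mono_neutral_cong_right) auto
  also have "\<dots> = (2 ^ M - D) * 2 ^ (t - 1)"
    by (simp add: card_Diff_subset D_def cU)
  finally have L: "(\<Sum>v\<in>UNIV. card {x\<in>E. dotp v x = 1}) = (2 ^ M - D) * 2 ^ (t - 1)" .
  have "(\<Sum>x\<in>E. card {v. dotp v x = 1}) = (\<Sum>x\<in>E. if x = 0 then 0 else 2 ^ (M - 1))"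
    using cv by simp
  also have "\<dots> = (\<Sum>x\<in>E - {0}. 2 ^ (M - 1))"
    by (rule sum.mono_neutral_cong_right) auto
  also have "\<dots> = (2 ^ t - 1) * 2 ^ (M - 1)"
    using fvs.subspace_0[OF sub] cE by (simp add: card_Diff_singleton)
  finally have R: "(\<Sum>x\<in>E. card {v. dotp v x = 1}) = (2 ^ t - 1) * 2 ^ (M - 1)" .
  have eq: "(2 ^ M - D) * 2 ^ (t - 1) = (2 ^ t - 1) * (2::nat) ^ (M - 1)"
    using L R sw by simp
  have DM: "D \<le> 2 ^ M" unfolding D_def using card_mono[of UNIV "dual E"] cU by simp
  define a where "a = (2::nat) ^ (M - t)"
  define b where "b = (2::nat) ^ (t - 1)"
  have b2: "2 ^ t = 2 * b" using t1 unfolding b_def by (metis Suc_diff_le diff_Suc_1 power_Suc)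
  have aM: "2 ^ M = 2 * a * b" using t1 tM unfolding a_def b_def M_def
    by (metis b2 b_def mult.assoc mult.commute le_add_diff_inverse2 power_add)
  have aM1: "2 ^ (M - 1) = a * b" using M1 aM
    by (metis Suc_diff_le diff_Suc_1 mult.assoc nonzero_mult_div_cancel_left power_Suc zero_neq_numeral)
  have bpos: "b > 0" by (simp add: b_def)
  have "int (2 * a * b - D) * int b = int ((2 * b - 1) * (a * b))"
    using eq by (simp only: b2 aM aM1 b_def flip: of_nat_mult)
  then have "(2 * int a * int b - int D) * int b = (2 * int b - 1) * (int a * int b)"
    using DM aM bpos by (simp add: of_nat_diff)
  then have "int D * int b = int a * int b" by (simp add: algebra_simps) (metis mult.commute)
  then have "D = a" using bpos by simp
  then show ?thesis by (simp add: D_def a_def M_def)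
qed


lemma cnt_gen: "k \<le> Q + 2 \<Longrightarrow> (Q+1)*(Q+1) - 1 - k*Q = (Q + 2 - k) * (Q::nat)"
  by (simp add: diff_mult_distrib algebra_simps)
lemma nat_from_int1: "int w = 2^n - int k \<Longrightarrow> k \<le> 2^n \<Longrightarrow> w = 2^n - k"
proof -
  assume a: "int w = 2^n - int k" "k \<le> 2^n"
  then have "int w = int (2^n - k)" by (simp add: of_nat_diff)
  then show ?thesis by simp
qed
lemma nat_from_int2: "int w = 2^n - int k + 2^t \<Longrightarrow> k \<le> 2^n \<Longrightarrow> w = 2^n + 2^t - k"
proof -
  assume a: "int w = 2^n - int k + 2^t" "k \<le> 2^n"
  then have "int w = int (2^n + 2^t - k)" by (simp add: of_nat_diff)
  then show ?thesis by simp
qed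

lemma bit_swap: "(p::bit) + q = r + s \<Longrightarrow> p + r = q + s"
  by (cases p; cases q; cases r; cases s) auto

lemma fun_swap:
  assumes "(p::'a \<Rightarrow> bit) + q = r + s" shows "p + r = q + s"
proof (rule ext)
  fix x
  have "p x + q x = r x + s x" using fun_cong[OF assms, of x] by (simp only: plus_fun_def)
  then show "(p + r) x = (q + s) x" by (simp only: plus_fun_def) (rule bit_swap)
qed

lemma zero_dual: "0 \<in> dual E" by (simp add: dual_def)

locale spr =
  fixes E :: "nat \<Rightarrow> ('n::finite \<Rightarrow> bit) set" and t m \<alpha> :: nat
  assumes cardn: "CARD('n) = m" and m2t: "m = 2 * t" and t3: "3 \<le> t"
    and ps: "partial_spread t \<alpha> E"
begin

lemma subE: "i \<in> {1..\<alpha>} \<Longrightarrow> fvs.subspace (E i)"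
  using ps by (simp add: partial_spread_def)

lemma cardE: "i \<in> {1..\<alpha>} \<Longrightarrow> card (E i) = 2 ^ t"
  using ps card_subspace[of "E i"] by (simp add: partial_spread_def)

lemma zeroE: "i \<in> {1..\<alpha>} \<Longrightarrow> 0 \<in> E i"
  using subE fvs.subspace_0 by blast

lemma disjE: "i \<in> {1..\<alpha>} \<Longrightarrow> j \<in> {1..\<alpha>} \<Longrightarrow> i \<noteq> j \<Longrightarrow> E i \<inter> E j = {0}"
  using ps by (simp add: partial_spread_def)

lemma cardU: "card (UNIV :: ('n \<Rightarrow> bit) set) = 2 ^ m"
  by (simp add: card_fun_bit cardn)

lemma cardDual: "i \<in> {1..\<alpha>} \<Longrightarrow> card (dual (E i)) = 2 ^ t"
  using card_dual[OF subE cardE, of i] t3 cardn m2t by simp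

lemma dual_disj:
  assumes i: "i \<in> {1..\<alpha>}" and j: "j \<in> {1..\<alpha>}" and ij: "i \<noteq> j"
  shows "dual (E i) \<inter> dual (E j) = {0}"
proof -
  let ?h = "\<lambda>(a, b). a + b :: 'n \<Rightarrow> bit"
  have inj: "inj_on ?h (E i \<times> E j)"
  proof (rule inj_onI, clarify)
    fix a b a' b' assume a: "a \<in> E i" "a' \<in> E i" and b: "b \<in> E j" "b' \<in> E j"
      and eq: "a + b = a' + b'"
    have "a + a' = b + b'" using fun_swap[OF eq] .
    moreover have "a + a' \<in> E i" using a subE[OF i] fvs.subspace_add by blast
    moreover have "b + b' \<in> E j" using b subE[OF j] fvs.subspace_add by blast
    ultimately have "a + a' = 0" using disjE[OF i j ij] by auto
    then have "a = a'" by (simp add: fun_add_eq0)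
    then show "a = a' \<and> b = b'" using eq by simp
  qed
  have "card (?h ` (E i \<times> E j)) = 2 ^ t * 2 ^ t"
    using card_image[OF inj] cardE[OF i] cardE[OF j] by (simp add: card_cartesian_product)
  also have "\<dots> = card (UNIV :: ('n \<Rightarrow> bit) set)" using cardU m2t by (simp add: power_add[symmetric] mult_2)
  finally have full: "?h ` (E i \<times> E j) = UNIV"
    by (intro card_subset_eq) auto
  show ?thesis
  proof
    show "dual (E i) \<inter> dual (E j) \<subseteq> {0}"
    proof
      fix v assume v: "v \<in> dual (E i) \<inter> dual (E j)"
      have "dotp v y = 0" for y
      proof -
        have "y \<in> ?h ` (E i \<times> E j)" using full by simp
        then obtain a b where "a \<in> E i" "b \<in> E j" "y = a + b" by auto
        then show ?thesis using v by (simp add: dual_def dotp_add_right)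
      qed
      then show "v \<in> {0}" using dotp_nonzero[of v] by auto
    qed
  qed (simp add: zero_dual)
qed

definition FS :: "nat set \<Rightarrow> ('n \<Rightarrow> bit) \<Rightarrow> bit" where
  "FS S x = (\<Sum>i\<in>S. ind (E i) x)"

definition US :: "nat set \<Rightarrow> ('n \<Rightarrow> bit) set" where
  "US S = (\<Union>i\<in>S. E i - {0})"

definition cwS :: "nat set \<Rightarrow> ('n \<Rightarrow> bit) \<Rightarrow> (('n \<Rightarrow> bit) \<Rightarrow> bit)" where
  "cwS S v = (\<lambda>x. if x \<in> coords then FS S x + dotp v x else 0)"

definition NS :: "nat set \<Rightarrow> ('n \<Rightarrow> bit) \<Rightarrow> nat" where
  "NS S v = card {i\<in>S. v \<in> dual (E i)}"

lemma FS_US: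
  assumes S: "S \<subseteq> {1..\<alpha>}"
  shows "FS S x = (if x \<in> US S then 1 else 0)"
proof (cases "x \<in> US S")
  case True
  then obtain i where i: "i \<in> S" "x \<in> E i" "x \<noteq> 0" by (auto simp: US_def)
  have fin: "finite S" using S finite_subset by blast
  have "FS S x = (\<Sum>j\<in>S. if j = i then 1 else 0)"
    unfolding FS_def
  proof (rule sum.cong[OF refl])
    fix j assume j: "j \<in> S"
    show "ind (E j) x = (if j = i then 1 else 0)"
    proof (cases "j = i")
      case True then show ?thesis using i by (simp add: ind_def)
    next
      case False
      have ij: "i \<in> {1..\<alpha>}" "j \<in> {1..\<alpha>}" using i j S by auto
      have "x \<notin> E j"
      proof
        assume "x \<in> E j"
        then have "x \<in> E i \<inter> E j" using i by simp
        then show False using disjE[OF ij] False i by auto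
      qed
      then show ?thesis using False by (simp add: ind_def)
    qed
  qed
  also have "\<dots> = 1" using i fin by simp
  finally show ?thesis using True by simp
next
  case False
  then have "FS S x = (\<Sum>j\<in>S. 0)" unfolding FS_def
    by (intro sum.cong[OF refl]) (auto simp: ind_def US_def)
  then show ?thesis using False by simp
qed

lemma US_coords: "US S \<subseteq> coords" by (auto simp: US_def coords_def)

lemma supp_cwS: "supp coords (cwS S v) = {x\<in>coords. FS S x + dotp v x = 1}"
  by (auto simp: supp_def cwS_def)

lemma card_US_filter:
  assumes S: "S \<subseteq> {1..\<alpha>}"
  shows "card {x\<in>US S. P x} = (\<Sum>i\<in>S. card {x\<in>E i - {0}. P x})"
proof -
  have fin: "finite S" using S finite_subset by blast
  have "{x\<in>US S. P x} = (\<Union>i\<in>S. {x\<in>E i - {0}. P x})" by (auto simp: US_def)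
  moreover have "card (\<Union>i\<in>S. {x\<in>E i - {0}. P x}) = (\<Sum>i\<in>S. card {x\<in>E i - {0}. P x})"
  proof (rule card_UN_disjoint[OF fin])
    show "\<forall>i\<in>S. finite {x \<in> E i - {0}. P x}" by simp
    show "\<forall>i\<in>S. \<forall>j\<in>S. i \<noteq> j \<longrightarrow> {x \<in> E i - {0}. P x} \<inter> {x \<in> E j - {0}. P x} = {}"
      using disjE S by blast
  qed
  ultimately show ?thesis by simp
qed

lemma wt0:
  assumes S: "S \<subseteq> {1..\<alpha>}"
  shows "wt coords (cwS S 0) = card S * (2 ^ t - 1)"
proof -
  have "supp coords (cwS S 0) = US S"
    using US_coords by (auto simp: supp_cwS FS_US[OF S])
  then have "wt coords (cwS S 0) = card {x\<in>US S. True}" by (simp add: wt_def)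
  also have "\<dots> = (\<Sum>i\<in>S. card {x\<in>E i - {0}. True})" by (rule card_US_filter[OF S])
  also have "\<dots> = (\<Sum>i\<in>S. card (E i - {0}))" by (simp add: set_diff_eq)
  also have "\<dots> = (\<Sum>i\<in>S. 2 ^ t - 1)"
    by (rule sum.cong[OF refl]) (use S zeroE cardE in \<open>auto simp: card_Diff_singleton\<close>)
  finally show ?thesis by simp
qed

lemma percount:
  assumes i: "i \<in> {1..\<alpha>}"
  shows "int (card {x\<in>E i - {0}. dotp v x = 0}) - int (card {x\<in>E i - {0}. dotp v x = 1})
         = (if v \<in> dual (E i) then 2 ^ t - 1 else - 1)"
proof -
  have z: "0 \<in> E i" using zeroE[OF i] .
  have e1: "{x\<in>E i - {0}. dotp v x = 1} = {x\<in>E i. dotp v x = 1}" by auto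
  have e0: "{x\<in>E i - {0}. dotp v x = 0} = {x\<in>E i. dotp v x = 0} - {0}" by auto
  have c0: "card {x\<in>E i - {0}. dotp v x = 0} = card {x\<in>E i. dotp v x = 0} - 1"
    unfolding e0 using z by (simp add: card_Diff_singleton)
  have t1: "1 \<le> t" using t3 by simp
  have p: "(2::int) ^ t = 2 * 2 ^ (t - 1)" using t1 by (metis Suc_diff_le diff_Suc_1 power_Suc)
  show ?thesis
  proof (cases "v \<in> dual (E i)")
    case True
    then show ?thesis using c0 e1 count_dual[OF True] cardE[OF i] by simp
  next
    case False
    have "card {x\<in>E i. dotp v x = 0} = 2 ^ (t - 1)" "card {x\<in>E i. dotp v x = 1} = 2 ^ (t - 1)"
      using count_nondual[OF subE[OF i] cardE[OF i] t1 False] by auto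
    moreover have "(1::nat) \<le> 2 ^ (t - 1)" by simp
    ultimately show ?thesis using c0 e1 False by (simp add: of_nat_diff)
  qed
qed

lemma wtv:
  assumes S: "S \<subseteq> {1..\<alpha>}" and v: "v \<noteq> 0"
  shows "int (wt coords (cwS S v)) = 2 ^ (m - 1) - int (card S) + 2 ^ t * int (NS S v)"
proof -
  have fin: "finite S" using S finite_subset by blast
  define D1 where "D1 = {x. dotp v x = 1}"
  have "supp coords (cwS S v) = {x\<in>coords. FS S x + dotp v x = 1}" by (rule supp_cwS)
  also have "\<dots> = {x\<in>US S. dotp v x = 0} \<union> (D1 - US S)"
    using US_coords[of S] by (auto simp: FS_US[OF S] D1_def coords_def)
  finally have supp: "supp coords (cwS S v) = {x\<in>US S. dotp v x = 0} \<union> (D1 - US S)" .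
  have "wt coords (cwS S v) = card {x\<in>US S. dotp v x = 0} + card (D1 - US S)"
    unfolding wt_def supp by (rule card_Un_disjoint) auto
  moreover have "card (D1 - US S) = card D1 - card (D1 \<inter> US S)"
    by (rule card_Diff_subset_Int) simp
  moreover have "card (D1 \<inter> US S) \<le> card D1" by (rule card_mono) auto
  moreover have "D1 \<inter> US S = {x\<in>US S. dotp v x = 1}" by (auto simp: D1_def)
  moreover have "card D1 = 2 ^ (m - 1)"
  proof -
    have "v \<notin> dual UNIV" using dotp_nonzero[OF v] by (auto simp: dual_def)
    then have "card {x\<in>UNIV. dotp v x = 1} = 2 ^ (m - 1)"
      using count_nondual(1)[OF fvs.subspace_UNIV cardU] t3 m2t by simp
    then show ?thesis by (simp add: D1_def)
  qed
  ultimately have w: "int (wt coords (cwS S v)) = 2 ^ (m - 1) +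
      (int (card {x\<in>US S. dotp v x = 0}) - int (card {x\<in>US S. dotp v x = 1}))"
    by (simp add: of_nat_diff)
  have "int (card {x\<in>US S. dotp v x = 0}) - int (card {x\<in>US S. dotp v x = 1})
      = (\<Sum>i\<in>S. int (card {x\<in>E i - {0}. dotp v x = 0}) - int (card {x\<in>E i - {0}. dotp v x = 1}))"
    by (simp add: card_US_filter[OF S] sum_subtractf)
  also have "\<dots> = (\<Sum>i\<in>S. 2 ^ t * (if v \<in> dual (E i) then 1 else 0) - 1)"
    by (rule sum.cong[OF refl]) (use S percount in auto)
  also have "\<dots> = 2 ^ t * (\<Sum>i\<in>S. (if v \<in> dual (E i) then 1 else 0)) - int (card S)"
    by (simp add: sum_subtractf sum_distrib_left)
  also have "(\<Sum>i\<in>S. (if v \<in> dual (E i) then 1 else 0)) = int (NS S v)"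
  proof -
    have "int (NS S v) = int (\<Sum>i\<in>S. if v \<in> dual (E i) then 1 else 0)"
      unfolding NS_def using card_filter_sum[OF fin, of "\<lambda>i. v \<in> dual (E i)"] by simp
    also have "\<dots> = (\<Sum>i\<in>S. if v \<in> dual (E i) then 1 else 0)"
      by (simp add: of_nat_sum) (rule sum.cong[OF refl], simp)
    finally show ?thesis by simp
  qed
  finally show ?thesis using w by simp
qed

lemma NS_le1:
  assumes S: "S \<subseteq> {1..\<alpha>}" and v: "v \<noteq> 0"
  shows "NS S v \<le> 1"
proof -
  have "finite S" using S finite_subset by blast
  then have fin: "finite {i\<in>S. v \<in> dual (E i)}" by simp
  have "\<forall>a\<in>{i\<in>S. v \<in> dual (E i)}. \<forall>b\<in>{i\<in>S. v \<in> dual (E i)}. a = b"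
  proof (intro ballI, rule ccontr)
    fix a b assume a: "a \<in> {i\<in>S. v \<in> dual (E i)}" and b: "b \<in> {i\<in>S. v \<in> dual (E i)}" and ab: "a \<noteq> b"
    then have "v \<in> dual (E a) \<inter> dual (E b)" by auto
    moreover have "a \<in> {1..\<alpha>}" "b \<in> {1..\<alpha>}" using a b S by auto
    ultimately show False using dual_disj[of a b] ab v by auto
  qed
  then show ?thesis unfolding NS_def using card_le_Suc0_iff_eq[OF fin] by simp
qed

lemma NS_empty: "NS {} v = 0" by (simp add: NS_def)

lemma cnt1:
  assumes S: "S \<subseteq> {1..\<alpha>}"
  shows "card {v. v \<noteq> 0 \<and> NS S v = 1} = card S * (2 ^ t - 1)"
proof -
  have fin: "finite S" using S finite_subset by blast
  have "{v. v \<noteq> 0 \<and> NS S v = 1} = (\<Union>i\<in>S. dual (E i) - {0})"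
  proof (intro equalityI subsetI)
    fix v assume "v \<in> {v. v \<noteq> 0 \<and> NS S v = 1}"
    then have "v \<noteq> 0" "card {i\<in>S. v \<in> dual (E i)} = 1" by (auto simp: NS_def)
    then show "v \<in> (\<Union>i\<in>S. dual (E i) - {0})" by (auto dest!: card_eq_SucD)
  next
    fix v assume "v \<in> (\<Union>i\<in>S. dual (E i) - {0})"
    then obtain i where i: "i \<in> S" "v \<in> dual (E i)" "v \<noteq> 0" by auto
    then have "NS S v \<noteq> 0" unfolding NS_def using fin by auto
    then show "v \<in> {v. v \<noteq> 0 \<and> NS S v = 1}" using NS_le1[OF S i(3)] i by auto
  qed
  moreover have "card (\<Union>i\<in>S. dual (E i) - {0}) = (\<Sum>i\<in>S. card (dual (E i) - {0}))"
  proof (rule card_UN_disjoint[OF fin])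
    show "\<forall>i\<in>S. finite (dual (E i) - {0})" by simp
    show "\<forall>i\<in>S. \<forall>j\<in>S. i \<noteq> j \<longrightarrow> (dual (E i) - {0}) \<inter> (dual (E j) - {0}) = {}"
      using dual_disj S by blast
  qed
  moreover have "(\<Sum>i\<in>S. card (dual (E i) - {0})) = (\<Sum>i\<in>S. 2 ^ t - 1)"
  proof (rule sum.cong[OF refl])
    fix i assume "i \<in> S"
    then have "i \<in> {1..\<alpha>}" using S by auto
    then show "card (dual (E i) - {0}) = 2 ^ t - 1"
      by (simp add: card_Diff_singleton zero_dual cardDual)
  qed
  ultimately show ?thesis by simp
qed

lemma cnt0:
  assumes S: "S \<subseteq> {1..\<alpha>}"
  shows "card {v. v \<noteq> 0 \<and> NS S v = 0} = 2 ^ m - 1 - card S * (2 ^ t - 1)"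
proof -
  have "{v. v \<noteq> 0 \<and> NS S v = 0} = (UNIV - {0}) - {v. v \<noteq> 0 \<and> NS S v = 1}"
    using NS_le1[OF S] by force
  moreover have "card ((UNIV - {0}) - {v. v \<noteq> 0 \<and> NS S v = 1}) = card (UNIV - {0::'n\<Rightarrow>bit}) - card {v. v \<noteq> 0 \<and> NS S v = 1}"
    by (rule card_Diff_subset) auto
  ultimately have "card {v. v \<noteq> 0 \<and> NS S v = 0} = card (UNIV - {0::'n\<Rightarrow>bit}) - card {v. v \<noteq> 0 \<and> NS S v = 1}"
    by simp
  then show ?thesis using cnt1[OF S] cardU by (simp add: card_Diff_singleton)
qed

lemma cnt_arith:
  assumes "k \<le> 2 ^ t + 1"
  shows "2 ^ m - 1 - k * (2 ^ t - 1) = (2 ^ t + 1 - k) * (2 ^ t - (1::nat))"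
proof -
  define Q where "Q = (2::nat) ^ t - 1"
  have P: "(2::nat) ^ t = Q + 1" unfolding Q_def by simp
  have m: "(2::nat) ^ m = 2 ^ t * 2 ^ t" using m2t by (simp add: power_add[symmetric] mult_2)
  have "k \<le> Q + 2" using assms P by simp
  then show ?thesis unfolding m P using cnt_gen[of k Q] by simp
qed

lemma mset_S:
  assumes S: "S \<subseteq> {1..\<alpha>}" and k1: "card S \<le> 2 ^ t + 1" and k2: "card S \<le> 2 ^ (m - 1)"
  shows "image_mset (\<lambda>v. wt coords (cwS S v)) (mset_set UNIV) =
     {# card S * (2 ^ t - 1) #}
     + replicate_mset ((2 ^ t + 1 - card S) * (2 ^ t - 1)) (2 ^ (m - 1) - card S)
     + replicate_mset (card S * (2 ^ t - 1)) (2 ^ (m - 1) + 2 ^ t - card S)"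
proof -
  define Z0 where "Z0 = {v. v \<noteq> 0 \<and> NS S v = 0}"
  define Z1 where "Z1 = {v. v \<noteq> 0 \<and> NS S v = 1}"
  have U: "(UNIV :: ('n \<Rightarrow> bit) set) = {0} \<union> Z0 \<union> Z1"
    using NS_le1[OF S] by (fastforce simp: Z0_def Z1_def le_Suc_eq)
  have ms: "mset_set (UNIV :: ('n \<Rightarrow> bit) set) = mset_set {0} + mset_set Z0 + mset_set Z1"
    unfolding U by (subst mset_set_Union; (simp add: Z0_def Z1_def)?; auto simp: mset_set_Union Z0_def Z1_def)+
  have i0: "image_mset (\<lambda>v. wt coords (cwS S v)) (mset_set Z0) = replicate_mset (card Z0) (2 ^ (m - 1) - card S)"
  proof -
    have "image_mset (\<lambda>v. wt coords (cwS S v)) (mset_set Z0) = image_mset (\<lambda>v. 2 ^ (m - 1) - card S) (mset_set Z0)"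
    proof (rule image_mset_cong)
      fix v assume "v \<in># mset_set Z0"
      then have "v \<noteq> 0" "NS S v = 0" by (auto simp: Z0_def)
      then have "int (wt coords (cwS S v)) = 2 ^ (m - 1) - int (card S)" using wtv[OF S] by simp
      then show "wt coords (cwS S v) = 2 ^ (m - 1) - card S" using k2 by (rule nat_from_int1)
    qed
    then show ?thesis by (simp add: image_mset_const_eq)
  qed
  have i1: "image_mset (\<lambda>v. wt coords (cwS S v)) (mset_set Z1) = replicate_mset (card Z1) (2 ^ (m - 1) + 2 ^ t - card S)"
  proof -
    have "image_mset (\<lambda>v. wt coords (cwS S v)) (mset_set Z1) = image_mset (\<lambda>v. 2 ^ (m - 1) + 2 ^ t - card S) (mset_set Z1)"
    proof (rule image_mset_cong)
      fix v assume "v \<in># mset_set Z1"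
      then have "v \<noteq> 0" "NS S v = 1" by (auto simp: Z1_def)
      then have "int (wt coords (cwS S v)) = 2 ^ (m - 1) - int (card S) + 2 ^ t" using wtv[OF S] by simp
      then show "wt coords (cwS S v) = 2 ^ (m - 1) + 2 ^ t - card S" using k2 by (rule nat_from_int2)
    qed
    then show ?thesis by (simp add: image_mset_const_eq)
  qed
  have "card Z0 = (2 ^ t + 1 - card S) * (2 ^ t - 1)"
    unfolding Z0_def using cnt0[OF S] cnt_arith[OF k1] by simp
  moreover have "card Z1 = card S * (2 ^ t - 1)" unfolding Z1_def using cnt1[OF S] .
  ultimately show ?thesis using i0 i1 ms wt0[OF S] by simp
qed

end

definition sd :: "'a set \<Rightarrow> 'a set \<Rightarrow> 'a set" where "sd X Y = (X - Y) \<union> (Y - X)"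

lemma bit_cancel: "(p::bit) + q + (p + r) = q + r"
  by (cases p; cases q; cases r) auto



lemma bit_lin: "(u::bit)*a + r*b + c + (u'*a + r'*b + d) = (u+u')*a + (r+r')*b + (c+d)"
  by algebra

lemma sum_sd:
  fixes h :: "nat \<Rightarrow> bit"
  assumes "finite X" "finite Y"
  shows "(\<Sum>i\<in>sd X Y. h i) = (\<Sum>i\<in>X. h i) + (\<Sum>i\<in>Y. h i)"
proof -
  have "(\<Sum>i\<in>sd X Y. h i) = (\<Sum>i\<in>X - Y. h i) + (\<Sum>i\<in>Y - X. h i)"
    unfolding sd_def by (rule sum.union_disjoint) (use assms in auto)
  moreover have "(\<Sum>i\<in>X. h i) = (\<Sum>i\<in>X \<inter> Y. h i) + (\<Sum>i\<in>X - Y. h i)"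
    using sum.Int_Diff[OF assms(1)] by blast
  moreover have "(\<Sum>i\<in>Y. h i) = (\<Sum>i\<in>X \<inter> Y. h i) + (\<Sum>i\<in>Y - X. h i)"
    using sum.Int_Diff[OF assms(2), of h X] by (simp add: Int_commute)
  ultimately show ?thesis by (simp only: bit_cancel)
qed

lemma wt_zero_imp:
  assumes "wt X c = 0" "finite X" "\<forall>x. x \<notin> X \<longrightarrow> c x = 0"
  shows "c = 0"
proof (rule ext)
  fix x
  have "supp X c = {}" using assms(1,2) by (simp add: wt_def supp_def)
  then show "c x = 0 x" using assms(3) by (cases "x \<in> X") (auto simp: supp_def)
qed

locale spr2 = spr E t m \<alpha> for E :: "nat \<Rightarrow> ('n::finite \<Rightarrow> bit) set" and t m \<alpha> +
  fixes A B :: "nat set" and s :: nat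
  assumes AS: "A \<subseteq> {1..\<alpha>}" and BS: "B \<subseteq> {1..\<alpha>}" and cA: "card A = s" and cB: "card B = s"
    and cAB: "card (A \<inter> B) = 1" and s2: "2 \<le> s" and sT: "s \<le> 2 ^ (t - 1) - 1"
begin

lemma finA: "finite A" using AS finite_subset by blast
lemma finB: "finite B" using BS finite_subset by blast

definition TS :: "bit \<Rightarrow> bit \<Rightarrow> nat set" where
  "TS u r = sd (if u = 1 then A else {}) (if r = 1 then B else {})"

definition cwp :: "bit \<Rightarrow> bit \<Rightarrow> ('n \<Rightarrow> bit) \<Rightarrow> (('n \<Rightarrow> bit) \<Rightarrow> bit)" where
  "cwp u r v = (\<lambda>x. if x \<in> coords then u * FS A x + r * FS B x + dotp v x else 0)"

definition K :: "bit \<Rightarrow> bit \<Rightarrow> nat" where "K u r = card (TS u r)"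

lemma TS_sub: "TS u r \<subseteq> {1..\<alpha>}"
  using AS BS by (auto simp: TS_def sd_def)

lemma FS_empty: "FS {} x = 0" by (simp add: FS_def)

lemma mult_FS: "u * FS X x = FS (if u = 1 then X else {}) x"
  by (cases u) (simp_all add: FS_empty)

lemma cwp_cwS: "cwp u r v = cwS (TS u r) v"
proof -
  have "u * FS A x + r * FS B x = FS (TS u r) x" for x
    unfolding mult_FS TS_def FS_def using finA finB by (simp add: sum_sd)
  then show ?thesis unfolding cwp_def cwS_def by (simp only:)
qed

lemma card_sdAB: "card (sd A B) = 2 * s - 2"
proof -
  have "card (A - B) = s - 1" using card_Diff_subset_Int[of A B] finA cA cAB by simp
  moreover have "card (B - A) = s - 1" using card_Diff_subset_Int[of B A] finB cB cAB by (simp add: Int_commute)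
  moreover have "card (sd A B) = card (A - B) + card (B - A)"
    unfolding sd_def by (rule card_Un_disjoint) (use finA finB in auto)
  ultimately show ?thesis using s2 by simp
qed

lemma sd_empty: "sd X {} = X" "sd {} Y = Y" by (auto simp: sd_def)

lemma K_vals: "K 0 0 = 0" "K 1 0 = s" "K 0 1 = s" "K 1 1 = 2 * s - 2"
  by (simp_all add: K_def TS_def sd_empty cA cB card_sdAB)

lemma K_cases: "(u = 0 \<and> r = 0 \<and> K u r = 0) \<or> ((u \<noteq> 0 \<or> r \<noteq> 0) \<and> s \<le> K u r \<and> K u r \<le> 2 * s - 2)"
  using K_vals s2 by (cases u; cases r) auto

lemma ar: "2 * s \<le> 2 ^ t - 2" "2 * s - 2 \<le> 2 ^ t + 1" "4 * 2 ^ t \<le> (2::nat) ^ (m - 1)" "s < 2 ^ t"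
proof -
  have t1: "2 ^ t = 2 * (2::nat) ^ (t - 1)" using t3 by (metis Suc_diff_le diff_Suc_1 le_trans one_le_numeral power_Suc)
  have "(1::nat) \<le> 2 ^ (t - 1) - 1" using sT s2 by simp
  then show "2 * s \<le> 2 ^ t - 2" "2 * s - 2 \<le> 2 ^ t + 1" "s < 2 ^ t" using sT t1 by auto
  have "t + 2 \<le> m - 1" using t3 m2t by simp
  then have "(2::nat) ^ (t + 2) \<le> 2 ^ (m - 1)" by (rule power_increasing) simp
  then show "4 * 2 ^ t \<le> (2::nat) ^ (m - 1)" by (simp add: power_add)
qed

lemma K_le: "K u r \<le> 2 ^ t + 1" "K u r \<le> 2 ^ (m - 1)"
  using K_cases[of u r] ar by auto

lemma wt_p0: "wt coords (cwp u r 0) = K u r * (2 ^ t - 1)"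
  unfolding cwp_cwS K_def using wt0[OF TS_sub] .

lemma wt_pv:
  assumes "v \<noteq> 0"
  shows "2 ^ (m - 1) - int (K u r) \<le> int (wt coords (cwp u r v))"
        "int (wt coords (cwp u r v)) \<le> 2 ^ (m - 1) - int (K u r) + 2 ^ t"
  using wtv[OF TS_sub assms, of u r] NS_le1[OF TS_sub assms, of u r]
  unfolding cwp_cwS K_def by auto

lemma cwp_add: "cwp u r v + cwp u' r' v' = cwp (u + u') (r + r') (v + v')"
proof (rule ext)
  fix x
  show "(cwp u r v + cwp u' r' v') x = cwp (u + u') (r + r') (v + v') x"
  proof (cases "x \<in> coords")
    case True
    then show ?thesis by (simp only: plus_fun_apply cwp_def True if_True dotp_add_left bit_lin)
  next
    case False
    then show ?thesis by (simp only: plus_fun_apply cwp_def False if_False add_0)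
  qed
qed

lemma cwp_out: "x \<notin> coords \<Longrightarrow> cwp u r v x = 0"
  by (simp add: cwp_def)

lemma cwp_zero:
  assumes "cwp u r v = 0"
  shows "u = 0 \<and> r = 0 \<and> v = 0"
proof -
  have w: "wt coords (cwp u r v) = 0" using assms by (simp add: wt_def supp_def)
  show ?thesis
  proof (cases "v = 0")
    case True
    then have "K u r * (2 ^ t - 1) = 0" using w wt_p0 by simp
    moreover have "(2::nat) ^ t - 1 \<noteq> 0" using ar(4) s2 by simp
    ultimately have "K u r = 0" by simp
    then show ?thesis using K_cases[of u r] s2 True by auto
  next
    case False
    have "2 ^ (m - 1) - int (K u r) \<le> 0" using wt_pv(1)[OF False, of u r] w by simp
    moreover have "K u r < 2 ^ (m - 1)" using K_cases[of u r] ar by auto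
    ultimately show ?thesis by (simp add: of_nat_less_iff[symmetric])
  qed
qed

lemma cwp_inj: "cwp u r v = cwp u' r' v' \<Longrightarrow> u = u' \<and> r = r' \<and> v = v'"
proof -
  assume eq: "cwp u r v = cwp u' r' v'"
  have "cwp (u + u') (r + r') (v + v') = 0" using cwp_add[of u r v u' r' v'] eq by simp
  then have "u + u' = 0" "r + r' = 0" "v + v' = 0" using cwp_zero by blast+
  then show ?thesis by (auto simp: fun_add_eq0)
qed

lemma code_eq: "code_fg (FS A) (FS B) = (\<lambda>(u, r, v). cwp u r v) ` UNIV"
proof -
  have "code_fg (FS A) (FS B) = {cwp u r v | u r v. True}" by (simp add: code_fg_def cwp_def)
  also have "\<dots> = (\<lambda>(u, r, v). cwp u r v) ` UNIV"
  proof (intro equalityI subsetI)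
    fix c assume "c \<in> {cwp u r v | u r v. True}"
    then obtain u r v where "c = cwp u r v" by blast
    then show "c \<in> (\<lambda>(u, r, v). cwp u r v) ` UNIV" by (auto intro: image_eqI[where x = "(u, r, v)"])
  qed auto
  finally show ?thesis .
qed

abbreviation CC where "CC \<equiv> code_fg (FS A) (FS B)"

lemma cwp_000: "cwp 0 0 0 = 0" by (rule ext) (simp add: cwp_def)

lemma in_CC: "c \<in> CC \<longleftrightarrow> (\<exists>u r v. c = cwp u r v)"
proof
  assume "c \<in> CC" then show "\<exists>u r v. c = cwp u r v" unfolding code_eq by auto
next
  assume "\<exists>u r v. c = cwp u r v"
  then obtain u r v where "c = cwp u r v" by blast
  then show "c \<in> CC" unfolding code_eq by (auto intro: image_eqI[where x = "(u, r, v)"])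
qed

lemma blc: "binary_linear_code coords CC"
  unfolding binary_linear_code_def
proof
  show "fvs.subspace CC"
    unfolding fvs.subspace_def
  proof (intro conjI ballI allI)
    show "0 \<in> CC" using cwp_000 in_CC by metis
  next
    fix x y assume "x \<in> CC" "y \<in> CC"
    then show "x + y \<in> CC" using cwp_add in_CC by metis
  next
    fix c :: bit and x assume "x \<in> CC"
    then show "fscale c x \<in> CC" using cwp_000 in_CC fscale_one
      by (cases c) auto
  qed
  show "\<forall>c\<in>CC. \<forall>x. x \<notin> coords \<longrightarrow> c x = 0" using in_CC cwp_out by auto
qed

lemma P8: "(8::nat) \<le> 2 ^ t"
proof -
  have "(2::nat) ^ 3 \<le> 2 ^ t" using t3 by (rule power_increasing) simp
  then show ?thesis by simp
qed

lemma Hsq: "2 * 2 ^ (m - 1) = 2 ^ t * (2::nat) ^ t"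
proof -
  have "2 * 2 ^ (m - 1) = (2::nat) ^ m" using t3 m2t
    by (metis Suc_diff_1 mult_2 power_Suc add_gr_0 less_le_trans numeral_le_iff one_le_numeral zero_less_numeral le_add1 not_numeral_le_zero)
  also have "\<dots> = 2 ^ t * 2 ^ t" using m2t by (simp add: power_add[symmetric] mult_2)
  finally show ?thesis .
qed

definition PP :: int where "PP = 2 ^ t"
definition HH :: int where "HH = 2 ^ (m - 1)"

lemma facts: "8 \<le> PP" "4 * PP \<le> HH" "2 * HH = PP * PP" "2 * int s \<le> PP - 2" "2 \<le> int s"
proof -
  have "int 8 \<le> int (2 ^ t)" using P8 by (simp only: of_nat_le_iff)
  then show "8 \<le> PP" unfolding PP_def by simp
  have "int (4 * 2 ^ t) \<le> int (2 ^ (m - 1))" using ar(3) by (simp only: of_nat_le_iff)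
  then show "4 * PP \<le> HH" unfolding PP_def HH_def by simp
  have "int (2 * 2 ^ (m - 1)) = int (2 ^ t * 2 ^ t)" using Hsq by simp
  then show "2 * HH = PP * PP" unfolding PP_def HH_def by simp
  have "int (2 * s) \<le> int (2 ^ t - 2)" using ar(1) by (simp only: of_nat_le_iff)
  moreover have "(2::nat) \<le> 2 ^ t" using P8 by simp
  ultimately show "2 * int s \<le> PP - 2" unfolding PP_def by (simp add: of_nat_diff)
  show "2 \<le> int s" using s2 by simp
qed

lemma Ki: "(u = 0 \<and> r = 0 \<and> K u r = 0) \<or> ((u \<noteq> 0 \<or> r \<noteq> 0) \<and> int s \<le> int (K u r) \<and> int (K u r) \<le> 2 * int s - 2)"
  using K_cases[of u r] s2 by (auto simp: of_nat_diff)

lemma wt_p0i: "int (wt coords (cwp u r 0)) = int (K u r) * (PP - 1)"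
proof -
  have "(1::nat) \<le> 2 ^ t" by simp
  then show ?thesis unfolding wt_p0 PP_def by (simp add: of_nat_diff)
qed

lemma wt_pvi:
  assumes "v \<noteq> 0"
  shows "HH - int (K u r) \<le> int (wt coords (cwp u r v))"
        "int (wt coords (cwp u r v)) \<le> HH - int (K u r) + PP"
  using wt_pv[OF assms, of u r] unfolding HH_def PP_def by auto

lemma wt_up: "int (wt coords (cwp u r v)) \<le> 2 * HH - 2 * PP"
proof (cases "v = 0")
  case True
  have K: "int (K u r) \<le> PP - 2" "0 \<le> int (K u r)" using Ki[of u r] facts by auto
  have "int (K u r) * (PP - 1) \<le> (PP - 2) * PP"
    using K facts by (intro mult_mono) auto
  also have "\<dots> = 2 * HH - 2 * PP" using facts(3) by (simp add: algebra_simps)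
  finally show ?thesis using True wt_p0i by simp
next
  case False
  show ?thesis using wt_pvi(2)[OF False, of u r] facts by simp
qed

lemma nz0: "cwp u r 0 \<noteq> 0 \<Longrightarrow> u \<noteq> 0 \<or> r \<noteq> 0"
  using cwp_000 by auto

lemma case_c:
  assumes n1: "cwp u1 r1 0 \<noteq> 0" and v2: "v2 \<noteq> 0"
  shows "wt coords (cwp (u1 + u2) (r1 + r2) v2) \<noteq> wt coords (cwp u1 r1 0) + wt coords (cwp u2 r2 v2)"
proof -
  have K1: "int s \<le> int (K u1 r1)" using Ki[of u1 r1] nz0[OF n1] by auto
  have K2: "int (K u2 r2) \<le> 2 * int s - 2" using Ki[of u2 r2] facts by auto
  have K3: "0 \<le> int (K (u1 + u2) (r1 + r2))" by simp
  have w1: "int (wt coords (cwp u1 r1 0)) \<ge> int s * (PP - 1)"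
    using wt_p0i[of u1 r1] K1 facts by (simp add: mult_right_mono)
  have "(int s - 1) * 8 \<le> (int s - 1) * PP" using facts by (intro mult_left_mono) auto
  then have sp: "int s * PP \<ge> PP + 8 * int s - 8" by (simp add: algebra_simps)
  show ?thesis
    using w1 wt_pvi(1)[OF v2, of u2 r2] wt_pvi(2)[OF v2, of "u1 + u2" "r1 + r2"] K2 K3 sp facts
    by (simp add: algebra_simps)
qed

lemma no_split:
  assumes n1: "cwp u1 r1 v1 \<noteq> 0" and n2: "cwp u2 r2 v2 \<noteq> 0"
  shows "wt coords (cwp (u1 + u2) (r1 + r2) (v1 + v2)) \<noteq> wt coords (cwp u1 r1 v1) + wt coords (cwp u2 r2 v2)"
proof (cases "v1 = 0")
  case v1: True
  show ?thesis
  proof (cases "v2 = 0")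
    case v2: True
    have K1: "int s \<le> int (K u1 r1)" using Ki[of u1 r1] nz0 n1 v1 by auto
    have K2: "int s \<le> int (K u2 r2)" using Ki[of u2 r2] nz0 n2 v2 by auto
    have K3: "int (K (u1 + u2) (r1 + r2)) \<le> 2 * int s - 2" using Ki[of "u1 + u2" "r1 + r2"] facts by auto
    define u3 where "u3 = u1 + u2"
    define r3 where "r3 = r1 + r2"
    have K3': "int (K u3 r3) \<le> 2 * int s - 2" using K3 unfolding u3_def r3_def .
    show ?thesis unfolding u3_def[symmetric] r3_def[symmetric]
    proof
      assume "wt coords (cwp u3 r3 (v1 + v2)) = wt coords (cwp u1 r1 v1) + wt coords (cwp u2 r2 v2)"
      then have "int (wt coords (cwp u3 r3 0)) = int (wt coords (cwp u1 r1 0)) + int (wt coords (cwp u2 r2 0))"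
        using v1 v2 by simp
      then have "int (K u3 r3) * (PP - 1) = (int (K u1 r1) + int (K u2 r2)) * (PP - 1)"
        unfolding wt_p0i by (simp add: algebra_simps)
      moreover have "PP - 1 \<noteq> 0" using facts by simp
      ultimately have "int (K u3 r3) = int (K u1 r1) + int (K u2 r2)" by simp
      then show False using K1 K2 K3' by simp
    qed
  next
    case v2: False
    show ?thesis using case_c[of u1 r1 v2 u2 r2] n1 v1 v2 by simp
  qed
next
  case v1: False
  show ?thesis
  proof (cases "v2 = 0")
    case v2: True
    have n2': "cwp u2 r2 0 \<noteq> 0" using n2 v2 by simp
    have h: "wt coords (cwp (u2 + u1) (r2 + r1) v1) \<noteq> wt coords (cwp u2 r2 0) + wt coords (cwp u1 r1 v1)"
      by (rule case_c[OF n2' v1])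
    have e: "u2 + u1 = u1 + u2" "r2 + r1 = r1 + r2" "v1 + v2 = v1" using v2 by (simp_all only: add.commute add_0_right add_0_left)
    show ?thesis using h unfolding e v2 by (simp only: add.commute add_0_left not_False_eq_True)
  next
    case v2: False
    have K1: "int (K u1 r1) \<le> 2 * int s - 2" using Ki[of u1 r1] facts by auto
    have K2: "int (K u2 r2) \<le> 2 * int s - 2" using Ki[of u2 r2] facts by auto
    show ?thesis using wt_pvi(1)[OF v1, of u1 r1] wt_pvi(1)[OF v2, of u2 r2]
        wt_up[of "u1 + u2" "r1 + r2" "v1 + v2"] K1 K2 facts by simp
  qed
qed

lemma minimal: "minimal_code coords CC"
  unfolding minimal_code_def
proof (intro ballI impI notI)
  fix c assume c: "c \<in> CC" "c \<noteq> 0"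
  assume "\<exists>c'\<in>CC. c' \<noteq> 0 \<and> c' \<noteq> c \<and> supp coords c' \<subseteq> supp coords c"
  then obtain c' where c': "c' \<in> CC" "c' \<noteq> 0" "c' \<noteq> c" "supp coords c' \<subseteq> supp coords c" by blast
  obtain u r v where cu: "c = cwp u r v" using c in_CC by blast
  obtain u1 r1 v1 where cu1: "c' = cwp u1 r1 v1" using c' in_CC by blast
  define b where "b = c + c'"
  have bcw: "b = cwp (u + u1) (r + r1) (v + v1)" unfolding b_def cu cu1 by (rule cwp_add)
  have bnz: "b \<noteq> 0" unfolding b_def using c'(3) by (simp add: fun_add_eq0)
  have cb: "c = c' + b" unfolding b_def by (metis add.left_commute fun_add_self add.right_neutral)
  have disj: "supp coords c' \<inter> supp coords b = {}"
  proof (rule ccontr)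
    assume "supp coords c' \<inter> supp coords b \<noteq> {}"
    then obtain x where x: "x \<in> supp coords c'" "x \<in> supp coords b" by blast
    then have "c x = 1" "c' x = 1" using c'(4) by (auto simp: supp_def)
    then have "b x = 0" by (simp add: b_def)
    then show False using x by (simp add: supp_def)
  qed
  have "supp coords c = supp coords c' \<union> supp coords b"
  proof (intro equalityI subsetI)
    fix x assume "x \<in> supp coords c"
    then show "x \<in> supp coords c' \<union> supp coords b" unfolding cb by (auto simp: supp_def)
  next
    fix x assume x: "x \<in> supp coords c' \<union> supp coords b"
    show "x \<in> supp coords c"
    proof (cases "x \<in> supp coords c'")
      case True then show ?thesis using c'(4) by auto
    next
      case False
      then have "x \<in> supp coords b" "c' x = 0" using x by (auto simp: supp_def)
      then show ?thesis unfolding cb by (auto simp: supp_def)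
    qed
  qed
  then have "wt coords c = wt coords c' + wt coords b"
    unfolding wt_def using disj by (simp add: card_Un_disjoint supp_def)
  moreover have "c = cwp (u1 + (u + u1)) (r1 + (r + r1)) (v1 + (v + v1))"
    using cb cwp_add[of u1 r1 v1 "u + u1" "r + r1" "v + v1"] cu1 bcw by simp
  ultimately show False
    using no_split[of u1 r1 v1 "u + u1" "r + r1" "v + v1"] c'(2) bnz cu1 bcw by simp
qed

lemma clen: "code_length (coords :: ('n \<Rightarrow> bit) set) = 2 ^ m - 1"
  unfolding code_length_def coords_def using cardU by (simp add: card_Diff_singleton)

abbreviation cwt where "cwt \<equiv> (\<lambda>(u, r, v). cwp u r v)"

lemma inj_cwt: "inj cwt"
  unfolding inj_def using cwp_inj by auto

lemma card_CC: "card CC = 2 ^ (m + 2)"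
proof -
  have "card CC = card (UNIV :: (bit \<times> bit \<times> ('n \<Rightarrow> bit)) set)"
    unfolding code_eq by (rule card_image[OF inj_cwt])
  also have "(UNIV :: (bit \<times> bit \<times> ('n \<Rightarrow> bit)) set) = UNIV \<times> (UNIV \<times> UNIV)" by simp
  also have "card (UNIV \<times> (UNIV \<times> (UNIV :: ('n \<Rightarrow> bit) set)) :: (bit \<times> bit \<times> ('n \<Rightarrow> bit)) set) = 2 * (2 * 2 ^ m)"
    by (simp only: card_cartesian_product card_bit cardU)
  finally show ?thesis by simp
qed

lemma cdim: "code_dim CC = m + 2"
proof -
  have "fvs.subspace CC" using blc by (simp add: binary_linear_code_def)
  then have "card CC = 2 ^ fvs.dim CC" by (rule card_subspace)
  then have eq: "(2::nat) ^ fvs.dim CC = 2 ^ (m + 2)" using card_CC by simp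
  have "fvs.dim CC = m + 2" using eq by (subst (asm) power_inject_exp) auto
  then show ?thesis unfolding code_dim_def .
qed

definition MSk :: "nat \<Rightarrow> nat multiset" where
  "MSk k = {# k * (2 ^ t - 1) #}
     + replicate_mset ((2 ^ t + 1 - k) * (2 ^ t - 1)) (2 ^ (m - 1) - k)
     + replicate_mset (k * (2 ^ t - 1)) (2 ^ (m - 1) + 2 ^ t - k)"

definition Q :: "bit \<Rightarrow> bit \<Rightarrow> (bit \<times> bit \<times> ('n \<Rightarrow> bit)) set" where
  "Q u r = (\<lambda>v. (u, r, v)) ` UNIV"

lemma pieceQ: "image_mset (\<lambda>p. wt coords (cwt p)) (mset_set (Q u r)) = MSk (K u r)"
proof -
  have "mset_set (Q u r) = image_mset (\<lambda>v. (u, r, v)) (mset_set UNIV)"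
    unfolding Q_def by (rule image_mset_mset_set[symmetric]) (auto simp: inj_on_def)
  then have "image_mset (\<lambda>p. wt coords (cwt p)) (mset_set (Q u r)) = image_mset (\<lambda>v. wt coords (cwS (TS u r) v)) (mset_set UNIV)"
    by (simp add: multiset.map_comp o_def cwp_cwS)
  also have "\<dots> = MSk (K u r)"
    unfolding MSk_def K_def using mset_S[OF TS_sub] K_le unfolding K_def by simp
  finally show ?thesis .
qed

lemma UNIV_Q: "(UNIV :: (bit \<times> bit \<times> ('n \<Rightarrow> bit)) set) = Q 0 0 \<union> Q 1 0 \<union> Q 0 1 \<union> Q 1 1"
proof (intro equalityI subsetI)
  fix p :: "bit \<times> bit \<times> ('n \<Rightarrow> bit)"
  obtain u r v where p: "p = (u, r, v)" by (cases p) auto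
  show "p \<in> Q 0 0 \<union> Q 1 0 \<union> Q 0 1 \<union> Q 1 1" unfolding p Q_def by (cases u; cases r) auto
qed auto

lemma wmset_sum: "weight_mset coords CC = MSk 0 + MSk s + MSk s + MSk (2 * s - 2)"
proof -
  have "weight_mset coords CC = image_mset (wt coords) (image_mset cwt (mset_set UNIV))"
    unfolding weight_mset_def code_eq by (simp add: image_mset_mset_set[OF inj_on_subset[OF inj_cwt]])
  also have "\<dots> = image_mset (wt coords \<circ> cwt) (mset_set UNIV)" by (simp add: multiset.map_comp)
  also have "mset_set (UNIV :: (bit \<times> bit \<times> ('n \<Rightarrow> bit)) set) = mset_set (Q 0 0) + mset_set (Q 1 0) + mset_set (Q 0 1) + mset_set (Q 1 1)"
    unfolding UNIV_Q by (subst mset_set_Union, simp, simp, fastforce simp: Q_def)+ simp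
  finally show ?thesis by (simp add: pieceQ K_vals)
qed

lemma rep_plus: "replicate_mset (a + b) x = replicate_mset a x + replicate_mset b x"
  by (induct a) simp_all

lemma wmset: "weight_mset coords CC =
          {#0#}
          + replicate_mset 2 (s * (2 ^ t - 1))
          + replicate_mset 1 ((2 * s - 2) * (2 ^ t - 1))
          + replicate_mset (2 ^ m - 1) (2 ^ (m - 1))
          + replicate_mset (2 * (2 ^ t + 1 - s) * (2 ^ t - 1)) (2 ^ (m - 1) - s)
          + replicate_mset ((2 ^ t + 3 - 2 * s) * (2 ^ t - 1)) (2 ^ (m - 1) - (2 * s - 2))
          + replicate_mset (2 * s * (2 ^ t - 1)) (2 ^ (m - 1) + 2 ^ t - s)
          + replicate_mset ((2 * s - 2) * (2 ^ t - 1)) (2 ^ (m - 1) + 2 ^ t - (2 * s - 2))"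
proof -
  have e1': "(2 ^ t + 1 - 0) * (2 ^ t - 1) = 2 ^ m - (1::nat)" using cnt_arith[of 0] by simp
  have e1: "replicate_mset ((2 ^ t + 1 - 0) * (2 ^ t - 1)) x = replicate_mset (2 ^ m - 1) x" for x :: nat
    by (simp only: e1')
  have e2: "2 ^ t + 1 - (2 * s - 2) = 2 ^ t + 3 - 2 * s" using s2 ar(1) by simp
  have n3: "2 * (2 ^ t + 1 - s) * (2 ^ t - 1) = (2 ^ t + 1 - s) * (2 ^ t - 1) + (2 ^ t + 1 - s) * (2 ^ t - (1::nat))" by simp
  have e3: "replicate_mset (2 * (2 ^ t + 1 - s) * (2 ^ t - 1)) x =
      replicate_mset ((2 ^ t + 1 - s) * (2 ^ t - 1)) x + replicate_mset ((2 ^ t + 1 - s) * (2 ^ t - 1)) x" for x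
    by (simp only: n3 rep_plus)
  have n4: "2 * s * (2 ^ t - 1) = s * (2 ^ t - 1) + s * (2 ^ t - (1::nat))" by simp
  have e4: "replicate_mset (2 * s * (2 ^ t - 1)) x =
      replicate_mset (s * (2 ^ t - 1)) x + replicate_mset (s * (2 ^ t - 1)) x" for x
    by (simp only: n4 rep_plus)
  have e5: "replicate_mset 2 x = {#x#} + {#x#}" "replicate_mset 1 x = {#x#}" for x :: nat
    by (simp_all add: numeral_2_eq_2)
  show ?thesis unfolding wmset_sum MSk_def e3 e4 e5 e2[symmetric] e1
    by (simp add: add_ac)
qed

lemma ratio:
  assumes "s \<le> 2 ^ (t - 2)"
  shows "real (Min (nonzero_weights coords CC)) / real (Max (nonzero_weights coords CC)) \<le> 1 / 2"
proof -
  define NW where "NW = nonzero_weights coords CC"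
  have fin: "finite NW" unfolding NW_def nonzero_weights_def
    by (rule finite_subset[of _ "wt coords ` CC"]) auto
  have a: "s * (2 ^ t - 1) \<in> NW"
  proof -
    have "cwp 1 0 0 \<noteq> 0" using cwp_zero by fastforce
    moreover have "wt coords (cwp 1 0 0) = s * (2 ^ t - 1)" using wt_p0 K_vals by simp
    moreover have "cwp 1 0 0 \<in> CC" using in_CC by blast
    ultimately show ?thesis unfolding NW_def nonzero_weights_def
      by (intro CollectI exI[of _ "cwp 1 0 0"]) simp
  qed
  define v0 :: "'n \<Rightarrow> bit" where "v0 = (\<lambda>_. 1)"
  have v0: "v0 \<noteq> 0" by (simp add: v0_def fun_eq_iff)
  have h: "2 ^ (m - 1) \<in> NW"
  proof -
    have "cwp 0 0 v0 \<noteq> 0" using cwp_zero v0 by fastforce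
    moreover have "wt coords (cwp 0 0 v0) = 2 ^ (m - 1)"
    proof -
      have "TS 0 0 = {}" by (simp add: TS_def sd_empty)
      then have "int (wt coords (cwp 0 0 v0)) = 2 ^ (m - 1)"
        using wtv[OF _ v0, of "{}"] by (simp add: cwp_cwS NS_empty)
      then show ?thesis using nat_from_int1[of _ "m - 1" 0] by simp
    qed
    moreover have "cwp 0 0 v0 \<in> CC" using in_CC by blast
    ultimately show ?thesis unfolding NW_def nonzero_weights_def
      by (intro CollectI exI[of _ "cwp 0 0 v0"]) simp
  qed
  have mn: "Min NW \<le> s * (2 ^ t - 1)" using Min_le[OF fin a] .
  have mx: "2 ^ (m - 1) \<le> Max NW" using Max_ge[OF fin h] .
  have key: "2 * (s * (2 ^ t - 1)) \<le> (2::nat) ^ (m - 1)"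
  proof -
    have "2 * (s * (2 ^ t - 1)) \<le> 2 * (2 ^ (t - 2) * 2 ^ t)"
      using assms by (intro mult_le_mono) auto
    also have "\<dots> = 2 ^ (Suc (t - 2) + t)" by (simp add: power_add)
    also have "Suc (t - 2) + t = m - 1" using t3 m2t by simp
    finally show ?thesis .
  qed
  have "2 * real (Min NW) \<le> real (Max NW)"
  proof -
    have "2 * Min NW \<le> Max NW" using mn mx key by linarith
    then have "real (2 * Min NW) \<le> real (Max NW)" by (simp only: of_nat_le_iff)
    then show ?thesis by simp
  qed
  moreover have "0 < real (Max NW)"
  proof -
    have "(0::nat) < 2 ^ (m - 1)" by simp
    then have "0 < Max NW" using mx by linarith
    then show ?thesis by simp
  qed
  ultimately show ?thesis unfolding NW_def[symmetric] by (simp add: divide_le_eq)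
qed

end

theorem theorem8:
  fixes E :: "nat \<Rightarrow> ('n::finite \<Rightarrow> bit) set"
    and m t s \<alpha> :: nat and A B :: "nat set"
    and f g :: "('n \<Rightarrow> bit) \<Rightarrow> bit"
  assumes "card (UNIV :: 'n set) = m" and "even m" and "m \<ge> 6" and "t = m div 2"
    and "2 \<le> s" and "s \<le> 2 ^ (t - 1) - 1"
    and "partial_spread t \<alpha> E"
    and "A \<subseteq> {1..\<alpha>}" and "B \<subseteq> {1..\<alpha>}"
    and "card A = s" and "card B = s" and "card (A \<inter> B) = 1"
    and "f = (\<lambda>x. \<Sum>i\<in>A. ind (E i) x)" and "g = (\<lambda>x. \<Sum>i\<in>B. ind (E i) x)"
  shows "binary_linear_code coords (code_fg f g)
      \<and> minimal_code coords (code_fg f g)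
      \<and> code_length (coords :: ('n \<Rightarrow> bit) set) = 2 ^ m - 1
      \<and> code_dim (code_fg f g) = m + 2
      \<and> weight_mset coords (code_fg f g) =
          {#0#}
          + replicate_mset 2 (s * (2 ^ t - 1))
          + replicate_mset 1 ((2 * s - 2) * (2 ^ t - 1))
          + replicate_mset (2 ^ m - 1) (2 ^ (m - 1))
          + replicate_mset (2 * (2 ^ t + 1 - s) * (2 ^ t - 1)) (2 ^ (m - 1) - s)
          + replicate_mset ((2 ^ t + 3 - 2 * s) * (2 ^ t - 1)) (2 ^ (m - 1) - (2 * s - 2))
          + replicate_mset (2 * s * (2 ^ t - 1)) (2 ^ (m - 1) + 2 ^ t - s)
          + replicate_mset ((2 * s - 2) * (2 ^ t - 1)) (2 ^ (m - 1) + 2 ^ t - (2 * s - 2))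
      \<and> (s \<le> 2 ^ (t - 2) \<longrightarrow>
          real (Min (nonzero_weights coords (code_fg f g)))
            / real (Max (nonzero_weights coords (code_fg f g))) \<le> 1 / 2)"
  proof -
  have m2: "m = 2 * t" using assms(2,4) by simp
  have t3: "3 \<le> t" using assms(3,4) by simp
  interpret X: spr2 E t m \<alpha> A B s
    using assms(1,5-12) m2 t3 by unfold_locales assumption+
  have fA: "f = X.FS A" using assms(13) by (simp add: fun_eq_iff X.FS_def)
  have gB: "g = X.FS B" using assms(14) by (simp add: fun_eq_iff X.FS_def)
  show ?thesis unfolding fA gB
    using X.blc X.minimal X.clen X.cdim X.wmset X.ratio by blast
qed

end
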